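(* Let $X$ be a compact metrizable abelian group, $T$ a continuous automorphism of $X$, and $Y\le X$ a closed subgroup with $TY=Y$ such that $T|_Y$ is ergodic with respect to the Haar measure of $Y$. Suppose that for some $x\in X$ and $n\in\mathbb{N}$ the coset $x+Y$ satisfies $T^n(x+Y)=x+Y$. Then there exists $x'\in x+Y$ with $T^nx'=x'$. *)

theory Defs
  imports "HOL-Analysis.Analysis" "HOL-Probability.Probability"
begin

definition closed_subgroup :: "'a::topological_ab_group_add set \<Rightarrow> bool" where
  "closed_subgroup Y \<longleftrightarrow> closed Y \<and> 0 \<in> Y \<and>
     (\<forall>a\<in>Y. \<forall>b\<in>Y. a + b \<in> Y) \<and> (\<forall>a\<in>Y. - a \<in> Y)"

definition cont_automorphism :: "('a::topological_ab_group_add \<Rightarrow> 'a) \<Rightarrow> bool" where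
  "cont_automorphism T \<longleftrightarrow> continuous_on UNIV T \<and> bij T \<and>
     (\<forall>a b. T (a + b) = T a + T b)"

definition haar_measure_on :: "'a::topological_ab_group_add set \<Rightarrow> 'a measure \<Rightarrow> bool" where
  "haar_measure_on Y \<mu> \<longleftrightarrow> sets \<mu> = sets (restrict_space borel Y) \<and> prob_space \<mu> \<and>
     (\<forall>y\<in>Y. \<forall>A\<in>sets \<mu>. (\<lambda>z. y + z) ` A \<in> sets \<mu> \<and>
        emeasure \<mu> ((\<lambda>z. y + z) ` A) = emeasure \<mu> A)"

definition ergodic_wrt :: "('a \<Rightarrow> 'a) \<Rightarrow> 'a measure \<Rightarrow> bool" where
  "ergodic_wrt T \<mu> \<longleftrightarrow> T \<in> measurable \<mu> \<mu> \<and> distr \<mu> \<mu> T = \<mu> \<and>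
     (\<forall>A\<in>sets \<mu>. T -` A \<inter> space \<mu> = A \<longrightarrow> emeasure \<mu> A = 0 \<or> emeasure \<mu> A = 1)"

end

theory Submission
  imports Defs
begin

lemma aut_basic:
  fixes T :: "'a::topological_ab_group_add \<Rightarrow> 'a"
  assumes "cont_automorphism T"
  shows "(T ^^ k) (a + b) = (T ^^ k) a + (T ^^ k) b"
    and "(T ^^ k) 0 = 0"
    and "(T ^^ k) (- a) = - (T ^^ k) a"
    and "(T ^^ k) (a - b) = (T ^^ k) a - (T ^^ k) b"
    and "continuous_on UNIV (T ^^ k)"
proof -
  have add: "\<And>a b. T (a + b) = T a + T b" using assms unfolding cont_automorphism_def by blast
  have ct: "continuous_on UNIV T" using assms unfolding cont_automorphism_def by blast
  show A: "\<And>a b. (T ^^ k) (a + b) = (T ^^ k) a + (T ^^ k) b"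
    by (induction k arbitrary: a b) (auto simp: add)
  show Z: "(T ^^ k) 0 = 0"
    using A[of 0 0] by simp
  show N: "\<And>a. (T ^^ k) (- a) = - (T ^^ k) a"
    using A Z by (metis add.right_inverse add_eq_0_iff2)
  show "\<And>a b. (T ^^ k) (a - b) = (T ^^ k) a - (T ^^ k) b"
    using A N by (metis diff_conv_add_uminus)
  show "continuous_on UNIV (T ^^ k)"
  proof (induction k)
    case 0 then show ?case by (simp add: continuous_on_id)
  next
    case (Suc k)
    have "continuous_on UNIV ((T ^^ k) \<circ> T)"
      by (rule continuous_on_compose[OF ct continuous_on_subset[OF Suc.IH subset_UNIV]])
    then show ?case by (simp only: funpow_Suc_right)
  qed
qed

lemma aut_Y:
  assumes "T ` Y = Y" "y \<in> Y"
  shows "(T ^^ k) y \<in> Y"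
  using assms by (induction k) auto

lemma haar_pos:
  fixes Y :: "'a::{topological_ab_group_add, metric_space} set"
  assumes "compact Y" "closed_subgroup Y" "haar_measure_on Y \<mu>" "open V" "Y \<inter> V \<noteq> {}"
  shows "Y \<inter> V \<in> sets \<mu>" "emeasure \<mu> (Y \<inter> V) > 0"
proof -
  have sm: "sets \<mu> = sets (restrict_space borel Y)" and ps: "prob_space \<mu>"
    and inv: "\<And>y A. y \<in> Y \<Longrightarrow> A \<in> sets \<mu> \<Longrightarrow> (\<lambda>z. y + z) ` A \<in> sets \<mu> \<and>
        emeasure \<mu> ((\<lambda>z. y + z) ` A) = emeasure \<mu> A"
    using assms(3) unfolding haar_measure_on_def by auto
  have cY: "closed Y" and sub: "\<And>a b. a \<in> Y \<Longrightarrow> b \<in> Y \<Longrightarrow> a + b \<in> Y"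
    and neg: "\<And>a. a \<in> Y \<Longrightarrow> - a \<in> Y"
    using assms(2) unfolding closed_subgroup_def by auto
  have diffY: "\<And>a b. a \<in> Y \<Longrightarrow> b \<in> Y \<Longrightarrow> a - b \<in> Y"
    using sub neg by (metis diff_conv_add_uminus)
  have Yb: "Y \<inter> space borel \<in> sets borel" using cY by simp
  have meas: "\<And>V. open V \<Longrightarrow> Y \<inter> V \<in> sets \<mu>"
    unfolding sm sets_restrict_space_iff[OF Yb] using cY by auto
  show "Y \<inter> V \<in> sets \<mu>" using meas assms(4) .
  have spY: "space \<mu> = Y"
    using sets_eq_imp_space_eq[OF sm] by (simp add: space_restrict_space)
  obtain u0 where u0: "u0 \<in> Y" "u0 \<in> V" using assms(5) by auto
  define Cv where "Cv = (\<lambda>y. (\<lambda>x. x - (y - u0)) -` V)"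
  have opC: "open (Cv y)" for y
    unfolding Cv_def by (intro open_vimage assms(4) continuous_intros)
  have cov: "Y \<subseteq> \<Union>(Cv ` Y)"
    using u0 unfolding Cv_def by force
  obtain F where F: "F \<subseteq> Y" "finite F" "Y \<subseteq> \<Union>(Cv ` F)"
    using compactE_image[OF assms(1) opC cov] by blast
  have eqt: "Y \<inter> Cv y = (\<lambda>z. (y - u0) + z) ` (Y \<inter> V)" if "y \<in> Y" for y
  proof
    show "Y \<inter> Cv y \<subseteq> (\<lambda>z. (y - u0) + z) ` (Y \<inter> V)"
    proof
      fix w assume w: "w \<in> Y \<inter> Cv y"
      then have "w - (y - u0) \<in> Y \<inter> V" using diffY u0 that unfolding Cv_def by auto
      moreover have "w = (y - u0) + (w - (y - u0))" by simp
      ultimately show "w \<in> (\<lambda>z. (y - u0) + z) ` (Y \<inter> V)" by blast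
    qed
    show "(\<lambda>z. (y - u0) + z) ` (Y \<inter> V) \<subseteq> Y \<inter> Cv y"
      using sub diffY u0 that unfolding Cv_def by auto
  qed
  have YU: "Y = (\<Union>y\<in>F. Y \<inter> Cv y)" using F by blast
  have "emeasure \<mu> Y \<le> (\<Sum>y\<in>F. emeasure \<mu> (Y \<inter> Cv y))"
    apply (subst YU, rule emeasure_subadditive_finite[OF F(2)])
    using meas opC by auto
  also have "\<dots> = (\<Sum>y\<in>F. emeasure \<mu> (Y \<inter> V))"
  proof (rule sum.cong[OF refl])
    fix y assume "y \<in> F"
    then have yY: "y \<in> Y" using F(1) by blast
    then have "y - u0 \<in> Y" using diffY u0 by blast
    then show "emeasure \<mu> (Y \<inter> Cv y) = emeasure \<mu> (Y \<inter> V)"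
      using eqt[OF yY] inv meas[OF assms(4)] by simp
  qed
  finally have le: "emeasure \<mu> Y \<le> of_nat (card F) * emeasure \<mu> (Y \<inter> V)" by simp
  have one: "emeasure \<mu> Y = 1"
    using prob_space.emeasure_space_1[OF ps] spY by simp
  show "emeasure \<mu> (Y \<inter> V) > 0"
  proof (rule ccontr)
    assume "\<not> emeasure \<mu> (Y \<inter> V) > 0"
    then have "emeasure \<mu> (Y \<inter> V) = 0" by (simp add: not_gr_zero)
    with le one show False by simp
  qed
qed

theorem lemma4p8:
  fixes T :: "'a::{topological_ab_group_add, metric_space} \<Rightarrow> 'a"
    and Y :: "'a set" and x :: 'a and n :: nat
  assumes "compact (UNIV :: 'a set)"
    and "cont_automorphism T"
    and "closed_subgroup Y"
    and "T ` Y = Y"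
    and "\<exists>\<mu>. haar_measure_on Y \<mu> \<and> ergodic_wrt T \<mu>"
    and "(T ^^ n) ` ((\<lambda>y. x + y) ` Y) = (\<lambda>y. x + y) ` Y"
  shows "\<exists>x'\<in>(\<lambda>y. x + y) ` Y. (T ^^ n) x' = x'"
proof (cases "n = 0")
  case True
  have "0 \<in> Y" using assms(3) unfolding closed_subgroup_def by blast
  then have "x + 0 \<in> (\<lambda>y. x + y) ` Y" by blast
  then show ?thesis using True by auto
next
  case False
  note TB = aut_basic[OF assms(2)]
  obtain \<mu> where haar: "haar_measure_on Y \<mu>" and erg: "ergodic_wrt T \<mu>" using assms(5) by blast
  have cY: "closed Y" and Y0: "0 \<in> Y" and sub: "\<And>a b. a \<in> Y \<Longrightarrow> b \<in> Y \<Longrightarrow> a + b \<in> Y"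
    and neg: "\<And>a. a \<in> Y \<Longrightarrow> - a \<in> Y"
    using assms(3) unfolding closed_subgroup_def by auto
  have diffY: "\<And>a b. a \<in> Y \<Longrightarrow> b \<in> Y \<Longrightarrow> a - b \<in> Y"
    using sub neg by (metis diff_conv_add_uminus)
  have compY: "compact Y" using assms(1) cY compact_Int_closed[of UNIV Y] by simp
  have TkY: "\<And>k y. y \<in> Y \<Longrightarrow> (T ^^ k) y \<in> Y" using aut_Y[OF assms(4)] by blast
  define S where "S = T ^^ n"
  define Z where "Z = (\<lambda>y. S y - y) ` Y"
  have ZY: "Z \<subseteq> Y" unfolding Z_def S_def using TkY diffY by blast
  have SZ: "\<And>y. y \<in> Y \<Longrightarrow> S y - y \<in> Z" unfolding Z_def by blast
  have Zadd: "a + b \<in> Z" if ab: "a \<in> Z" "b \<in> Z" for a b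
  proof -
    obtain a' b' where "a' \<in> Y" "b' \<in> Y" "a = S a' - a'" "b = S b' - b'" using ab unfolding Z_def by blast
    then have "a + b = S (a' + b') - (a' + b')" unfolding S_def using TB(1) by (simp add: algebra_simps)
    then show ?thesis using SZ sub \<open>a' \<in> Y\<close> \<open>b' \<in> Y\<close> by simp
  qed
  have Zneg: "- a \<in> Z" if aZ: "a \<in> Z" for a
  proof -
    obtain a' where "a' \<in> Y" "a = S a' - a'" using aZ unfolding Z_def by blast
    then have "- a = S (- a') - (- a')" unfolding S_def using TB(3) by (simp add: algebra_simps)
    then show ?thesis using SZ[OF neg[OF \<open>a' \<in> Y\<close>]] by simp
  qed
  have ZT: "T a \<in> Z" if aZ: "a \<in> Z" for a
  proof -
    obtain a' where a': "a' \<in> Y" "a = S a' - a'" using aZ unfolding Z_def by blast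
    have "T a = (T ^^ 1) a" by simp
    also have "\<dots> = (T ^^ 1) (S a') - (T ^^ 1) a'" using a' TB(4)[of 1] by simp
    also have "\<dots> = S (T a') - T a'" unfolding S_def by (simp add: funpow_swap1)
    finally show ?thesis using SZ a' assms(4) by auto
  qed
  have ZTk: "(T ^^ k) a \<in> Z" if "a \<in> Z" for a k
    using that by (induction k) (auto intro: ZT)
  have Zcomp: "compact Z"
    unfolding Z_def S_def
    by (intro compact_continuous_image compY continuous_intros continuous_on_subset[OF TB(5)]) auto
  have Zcl: "closed Z" using Zcomp compact_imp_closed by blast
  have Z0: "0 \<in> Z" using SZ[OF Y0] TB(2) unfolding S_def by simp
  have ZYeq: "Z = Y"
  proof (rule ccontr)
    assume "Z \<noteq> Y"
    then obtain y0 where y0: "y0 \<in> Y" "y0 \<notin> Z" using ZY by blast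
    have notZ: "(T ^^ k) y0 \<notin> Z" if "k < n" for k
    proof
      assume "(T ^^ k) y0 \<in> Z"
      then have "(T ^^ (n - k)) ((T ^^ k) y0) \<in> Z" by (rule ZTk)
      then have "S y0 \<in> Z" unfolding S_def using that
        by (metis funpow_add le_add_diff_inverse2 less_imp_le_nat o_apply)
      then have "S y0 - (S y0 - y0) \<in> Z" using Zadd Zneg SZ[OF y0(1)] by (metis diff_conv_add_uminus)
      then show False using y0 by simp
    qed
    define P where "P = (\<Union>k<n. (\<lambda>z. (T ^^ k) y0 - z) ` Z)"
    have Pcomp: "compact P" unfolding P_def
      by (intro compact_UN finite_lessThan ballI compact_continuous_image Zcomp continuous_intros)
    have P0: "0 \<notin> P"
    proof
      assume "0 \<in> P"
      then obtain k z where "k < n" "z \<in> Z" "0 = (T ^^ k) y0 - z" unfolding P_def by blast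
      then show False using notZ by auto
    qed
    define G where "G = (\<lambda>p::'a \<times> 'a. fst p - snd p) -` (- P)"
    have opG: "open G" unfolding G_def
      using Pcomp compact_imp_closed by (intro open_vimage continuous_intros) auto
    have "(0, 0) \<in> G" unfolding G_def using P0 by simp
    then obtain A B where AB: "open A" "open B" "(0, 0) \<in> A \<times> B" "A \<times> B \<subseteq> G"
      using open_prod_elim[OF opG] by metis
    define U where "U = A \<inter> B"
    have opU: "open U" and U0: "0 \<in> U" unfolding U_def using AB by auto
    have Udiff: "a - b \<notin> P" if "a \<in> U" "b \<in> U" for a b
      using that AB(4) unfolding U_def G_def by auto
    define ZU where "ZU = (\<Union>z\<in>Z. (\<lambda>x. x - z) -` U)"
    have opZU: "open ZU" unfolding ZU_def using opU by (intro open_UN ballI open_vimage continuous_intros) auto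
    have ZUshift: "a + d \<in> ZU \<longleftrightarrow> a \<in> ZU" if "d \<in> Z" for a d
    proof
      assume "a + d \<in> ZU"
      then obtain z where "z \<in> Z" "a + d - z \<in> U" unfolding ZU_def by blast
      moreover have "z - d \<in> Z" using Zadd Zneg that \<open>z \<in> Z\<close> by (metis diff_conv_add_uminus)
      moreover have "a - (z - d) = a + d - z" by (simp add: algebra_simps)
      ultimately show "a \<in> ZU" unfolding ZU_def by (metis UNIV_I vimage_eq UN_iff)
    next
      assume "a \<in> ZU"
      then obtain z where "z \<in> Z" "a - z \<in> U" unfolding ZU_def by blast
      moreover have "z + d \<in> Z" using Zadd that \<open>z \<in> Z\<close> by blast
      moreover have "a + d - (z + d) = a - z" by (simp add: algebra_simps)
      ultimately show "a + d \<in> ZU" unfolding ZU_def by (metis UNIV_I vimage_eq UN_iff)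
    qed
    have SZU: "S y \<in> ZU \<longleftrightarrow> y \<in> ZU" if "y \<in> Y" for y
      using ZUshift[OF SZ[OF that], of y] by simp
    define C where "C = Y \<inter> (\<Union>k<n. (T ^^ k) -` ZU)"
    define E where "E = Y \<inter> (\<Inter>k<n. (\<lambda>y. (T ^^ k) y - (T ^^ k) y0) -` U)"
    have opC: "open (\<Union>k<n. (T ^^ k) -` ZU)"
      using opZU by (intro open_UN ballI open_vimage TB(5))
    have opE: "open (\<Inter>k<n. (\<lambda>y. (T ^^ k) y - (T ^^ k) y0) -` U)"
      using opU by (intro open_INT finite_lessThan ballI open_vimage continuous_intros TB(5))
    have "0 \<in> ZU" unfolding ZU_def using Z0 U0 by force
    then have "0 \<in> C" unfolding C_def using Y0 False TB(2) by force
    then have "Y \<inter> (\<Union>k<n. (T ^^ k) -` ZU) \<noteq> {}" unfolding C_def by blast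
    then have C: "C \<in> sets \<mu>" "emeasure \<mu> C > 0"
      using haar_pos[OF compY assms(3) haar opC] unfolding C_def by auto
    have "y0 \<in> E" unfolding E_def using y0 U0 by simp
    then have "Y \<inter> (\<Inter>k<n. (\<lambda>y. (T ^^ k) y - (T ^^ k) y0) -` U) \<noteq> {}" unfolding E_def by blast
    then have E: "E \<in> sets \<mu>" "emeasure \<mu> E > 0"
      using haar_pos[OF compY assms(3) haar opE] unfolding E_def by auto
    have disj: "C \<inter> E = {}"
    proof (rule ccontr)
      assume "C \<inter> E \<noteq> {}"
      then obtain y k where k: "k < n" "(T ^^ k) y \<in> ZU" "(T ^^ k) y - (T ^^ k) y0 \<in> U"
        unfolding C_def E_def by blast
      then obtain z where z: "z \<in> Z" "(T ^^ k) y - z \<in> U" unfolding ZU_def by blast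
      have "((T ^^ k) y - z) - ((T ^^ k) y - (T ^^ k) y0) = (T ^^ k) y0 - z" by (simp add: algebra_simps)
      moreover have "(T ^^ k) y0 - z \<in> P" unfolding P_def using k(1) z(1) by blast
      ultimately show False using Udiff[OF z(2) k(3)] by simp
    qed
    have sm: "sets \<mu> = sets (restrict_space borel Y)" and ps: "prob_space \<mu>"
      using haar unfolding haar_measure_on_def by auto
    have spY: "space \<mu> = Y"
      using sets_eq_imp_space_eq[OF sm] by (simp add: space_restrict_space)
    have inv: "T -` C \<inter> space \<mu> = C"
    proof (intro set_eqI iffI)
      fix y assume "y \<in> T -` C \<inter> space \<mu>"
      then have yY: "y \<in> Y" and "T y \<in> C" using spY by auto
      then obtain k where k: "k < n" "(T ^^ k) (T y) \<in> ZU" unfolding C_def by blast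
      then have k': "(T ^^ Suc k) y \<in> ZU" by (simp only: funpow_Suc_right o_apply)
      show "y \<in> C"
      proof (cases "Suc k = n")
        case True
        then have "y \<in> ZU" using k' SZU[OF yY] unfolding S_def by simp
        then show ?thesis unfolding C_def using yY False by force
      next
        case False
        then have "Suc k < n" using k(1) by simp
        then show ?thesis unfolding C_def using yY k' by blast
      qed
    next
      fix y assume "y \<in> C"
      then have yY: "y \<in> Y" and TyY: "T y \<in> Y" and "\<exists>k<n. (T ^^ k) y \<in> ZU" unfolding C_def using assms(4) by auto
      then obtain k where k: "k < n" "(T ^^ k) y \<in> ZU" by blast
      have "\<exists>j<n. (T ^^ j) (T y) \<in> ZU"
      proof (cases k)
        case 0
        then have "S y \<in> ZU" using k SZU[OF yY] by simp
        moreover have "S y = (T ^^ (n - 1)) (T y)" unfolding S_def using \<open>n \<noteq> 0\<close>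
          by (metis Suc_diff_1 funpow_Suc_right gr0I o_apply)
        ultimately show ?thesis using \<open>n \<noteq> 0\<close> by (metis diff_less zero_less_one gr0I)
      next
        case (Suc j)
        then have "(T ^^ j) (T y) \<in> ZU" using k by (simp only: funpow_Suc_right o_apply)
        then show ?thesis using k(1) Suc by (metis Suc_lessD)
      qed
      then show "y \<in> T -` C \<inter> space \<mu>" unfolding C_def using TyY yY spY by auto
    qed
    have "emeasure \<mu> C = 0 \<or> emeasure \<mu> C = 1"
      using erg C(1) inv unfolding ergodic_wrt_def by blast
    then have C1: "emeasure \<mu> C = 1" using C(2) by auto
    have "emeasure \<mu> (C \<union> E) = emeasure \<mu> C + emeasure \<mu> E"
      using C(1) E(1) disj by (intro plus_emeasure[symmetric]) auto
    moreover have "emeasure \<mu> (C \<union> E) \<le> emeasure \<mu> (space \<mu>)"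
      using C(1) E(1) by (intro emeasure_mono) (auto dest: sets.sets_into_space)
    moreover have "emeasure \<mu> (space \<mu>) = 1" using prob_space.emeasure_space_1[OF ps] .
    ultimately have "1 + emeasure \<mu> E \<le> 1" using C1 by simp
    moreover have "emeasure \<mu> E < \<top>"
    proof -
      have "emeasure \<mu> E \<le> emeasure \<mu> (space \<mu>)"
        using E(1) by (intro emeasure_mono) (auto dest: sets.sets_into_space)
      then show ?thesis using prob_space.emeasure_space_1[OF ps] by (simp add: order_le_less_trans)
    qed
    ultimately have "1 + emeasure \<mu> E \<le> 1 + 0" by simp
    then have "emeasure \<mu> E \<le> 0" unfolding ennreal_add_left_cancel_le by simp
    then show False using E(2) by simp
  qed
  have "S x \<in> (\<lambda>y. x + y) ` Y" unfolding S_def using assms(6) Y0 by (metis add.right_neutral image_eqI)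
  then obtain d where d: "d \<in> Y" "S x = x + d" by blast
  then have "- d \<in> Z" using ZYeq neg by simp
  then obtain y where y1: "y \<in> Y" and y2: "- d = S y - y" unfolding Z_def by (rule imageE)
  have y: "y \<in> Y" "S y - y = - d" using y1 y2 by simp_all
  have Sy: "S y = y - d" using y(2) by (simp add: algebra_simps eq_neg_iff_add_eq_0)
  have "S (x + y) = S x + S y" unfolding S_def using TB(1) by blast
  also have "\<dots> = x + y" using d(2) Sy by simp
  finally have "S (x + y) = x + y" .
  then have fx: "(T ^^ n) (x + y) = x + y" unfolding S_def .
  have "x + y \<in> (\<lambda>y. x + y) ` Y" using y(1) by (rule imageI)
  then show ?thesis using fx by (rule bexI[rotated])
qed

end
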